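(* Let $G$ be a graph with parameters $(r_2,r_3)$ and let $e$ be an edge of $G$ with $K_3\deg(e)=k$. Then \[2r_3 \leq (r_2-k-1)(r_2-2) + k(k+1).\]
   Context: All graphs are finite, simple and undirected. For a vertex $v$, $K_3\deg(v)$ is the number of triangles of $G$ containing $v$; for an edge $uv$, $K_3\deg(uv)=|N(u)\cap N(v)|$ is the number of triangles containing the edge $uv$, where $N(\cdot)$ denotes the open neighbourhood. A graph $G$ has parameters $(r_2,r_3)$ if every vertex has degree $r_2$ and every vertex has $K_3$-degree $r_3$. *)

theory Defs
  imports Main
begin

definition simple_graph :: "'a set \<Rightarrow> ('a \<Rightarrow> 'a \<Rightarrow> bool) \<Rightarrow> bool" where
  "simple_graph V E \<longleftrightarrow> finite V \<and> (\<forall>u v. E u v \<longrightarrow> u \<in> V \<and> v \<in> V)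
     \<and> (\<forall>u v. E u v \<longrightarrow> E v u) \<and> (\<forall>v. \<not> E v v)"

definition nbhd :: "'a set \<Rightarrow> ('a \<Rightarrow> 'a \<Rightarrow> bool) \<Rightarrow> 'a \<Rightarrow> 'a set" where
  "nbhd V E v = {u \<in> V. E v u}"

definition degree :: "'a set \<Rightarrow> ('a \<Rightarrow> 'a \<Rightarrow> bool) \<Rightarrow> 'a \<Rightarrow> nat" where
  "degree V E v = card (nbhd V E v)"

definition triangles :: "'a set \<Rightarrow> ('a \<Rightarrow> 'a \<Rightarrow> bool) \<Rightarrow> 'a set set" where
  "triangles V E = {T. T \<subseteq> V \<and> card T = 3 \<and> (\<forall>x\<in>T. \<forall>y\<in>T. x \<noteq> y \<longrightarrow> E x y)}"

definition K3deg :: "'a set \<Rightarrow> ('a \<Rightarrow> 'a \<Rightarrow> bool) \<Rightarrow> 'a \<Rightarrow> nat" where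
  "K3deg V E v = card {T \<in> triangles V E. v \<in> T}"

definition K3deg_edge :: "'a set \<Rightarrow> ('a \<Rightarrow> 'a \<Rightarrow> bool) \<Rightarrow> 'a \<Rightarrow> 'a \<Rightarrow> nat" where
  "K3deg_edge V E u v = card (nbhd V E u \<inter> nbhd V E v)"

definition has_params :: "'a set \<Rightarrow> ('a \<Rightarrow> 'a \<Rightarrow> bool) \<Rightarrow> nat \<Rightarrow> nat \<Rightarrow> bool" where
  "has_params V E r2 r3 \<longleftrightarrow> (\<forall>v\<in>V. degree V E v = r2 \<and> K3deg V E v = r3)"

end

theory Submission
  imports Defs
begin

definition pc :: "('a \<Rightarrow> 'a \<Rightarrow> bool) \<Rightarrow> 'a set \<Rightarrow> 'a set \<Rightarrow> nat" where
  "pc E X Y = (\<Sum>w\<in>X. \<Sum>x\<in>Y. if E w x then 1 else 0)"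

lemma pc_card: "finite Y \<Longrightarrow> pc E X Y = (\<Sum>w\<in>X. card {x\<in>Y. E w x})"
  unfolding pc_def by (intro sum.cong refl) (simp add: sum.If_cases Int_def conj_commute)

lemma pc_UnL: "finite X \<Longrightarrow> finite Z \<Longrightarrow> X \<inter> Z = {} \<Longrightarrow> pc E (X \<union> Z) Y = pc E X Y + pc E Z Y"
  unfolding pc_def by (simp add: sum.union_disjoint)

lemma pc_UnR: "finite X \<Longrightarrow> finite Z \<Longrightarrow> X \<inter> Z = {} \<Longrightarrow> pc E Y (X \<union> Z) = pc E Y X + pc E Y Z"
  unfolding pc_def by (simp add: sum.union_disjoint sum.distrib)

lemma pc_sym: "(\<forall>a b. E a b \<longrightarrow> E b a) \<Longrightarrow> pc E X Y = pc E Y X"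
  unfolding pc_def
  apply (subst sum.swap)
  apply (intro sum.cong refl)
  by metis

lemma pc_single: "finite Y \<Longrightarrow> pc E {a} Y = card {x\<in>Y. E a x}"
  by (simp add: pc_card)

lemma pc_diag: assumes "finite X" "\<forall>v. \<not> E v v" shows "pc E X X \<le> card X * (card X - 1)"
proof -
  have "pc E X X = (\<Sum>w\<in>X. card {x\<in>X. E w x})" using assms by (simp add: pc_card)
  also have "\<dots> \<le> (\<Sum>w\<in>X. card X - 1)"
  proof (rule sum_mono)
    fix w assume w: "w \<in> X"
    have "{x\<in>X. E w x} \<subseteq> X - {w}" using assms(2) by auto
    then have "card {x\<in>X. E w x} \<le> card (X - {w})" using assms(1) by (intro card_mono) auto
    then show "card {x\<in>X. E w x} \<le> card X - 1" using w by simp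
  qed
  finally show ?thesis by simp
qed

lemma tri_count:
  assumes g: "simple_graph V E" and u: "u \<in> V"
  shows "2 * K3deg V E u = pc E (nbhd V E u) (nbhd V E u)"
proof -
  let ?N = "nbhd V E u"
  let ?T = "{T \<in> triangles V E. u \<in> T}"
  let ?F = "\<lambda>T. {(w,x). w \<in> T - {u} \<and> x \<in> T - {u} \<and> w \<noteq> x}"
  let ?P = "{(w,x). w \<in> ?N \<and> x \<in> ?N \<and> E w x}"
  have fin: "finite V" and inV: "\<And>a b. E a b \<Longrightarrow> a \<in> V \<and> b \<in> V"
    and sym: "\<And>a b. E a b \<Longrightarrow> E b a" and irr: "\<And>a. \<not> E a a"
    using g unfolding simple_graph_def by auto
  have finN: "finite ?N" using fin unfolding nbhd_def by auto
  have "pc E ?N ?N = card (SIGMA w:?N. {x\<in>?N. E w x})"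
    using finN by (simp add: pc_card)
  also have "(SIGMA w:?N. {x\<in>?N. E w x}) = ?P" by auto
  finally have 1: "pc E ?N ?N = card ?P" .
  have finT: "finite ?T"
    by (rule finite_subset[of _ "Pow V"]) (auto simp: triangles_def fin)
  have F2: "card (?F T) = 2" if "T \<in> ?T" for T
  proof -
    have "card T = 3" "u \<in> T" "finite T" using that unfolding triangles_def
      by (auto intro: card_ge_0_finite)
    then have "card (T - {u}) = 2" by simp
    then obtain a b where ab: "T - {u} = {a,b}" "a \<noteq> b" by (auto simp: card_2_iff)
    then have "?F T = {(a,b),(b,a)}" by auto
    then show ?thesis using ab by simp
  qed
  have finF: "finite (?F T)" if "T \<in> ?T" for T
    using F2[OF that] by (intro card_ge_0_finite) simp
  have disj: "\<forall>T1\<in>?T. \<forall>T2\<in>?T. T1 \<noteq> T2 \<longrightarrow> ?F T1 \<inter> ?F T2 = {}"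
  proof (intro ballI impI)
    fix T1 T2 assume t1: "T1 \<in> ?T" and t2: "T2 \<in> ?T" and ne: "T1 \<noteq> T2"
    show "?F T1 \<inter> ?F T2 = {}"
    proof (rule ccontr)
      assume "?F T1 \<inter> ?F T2 \<noteq> {}"
      then obtain w x where w: "w \<in> T1 - {u}" "x \<in> T1 - {u}" "w \<in> T2 - {u}" "x \<in> T2 - {u}" "w \<noteq> x"
        by auto
      have c1: "card T1 = 3" "u \<in> T1" "finite T1" using t1 unfolding triangles_def
        by (auto intro: card_ge_0_finite)
      have c2: "card T2 = 3" "u \<in> T2" "finite T2" using t2 unfolding triangles_def
        by (auto intro: card_ge_0_finite)
      have s1: "{u,w,x} \<subseteq> T1" "{u,w,x} \<subseteq> T2" using w c1 c2 by auto
      have "card {u,w,x} = 3" using w by auto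
      then have "{u,w,x} = T1" "{u,w,x} = T2" using s1 c1 c2 by (metis card_subset_eq)+
      then show False using ne by simp
    qed
  qed
  have PU: "?P = (\<Union>T\<in>?T. ?F T)"
  proof
    show "?P \<subseteq> (\<Union>T\<in>?T. ?F T)"
    proof
      fix p assume "p \<in> ?P"
      then obtain w x where p: "p = (w,x)" "w \<in> ?N" "x \<in> ?N" "E w x" by auto
      have uw: "E u w" "E u x" using p unfolding nbhd_def by auto
      have ne: "u \<noteq> w" "u \<noteq> x" "w \<noteq> x" using uw p(4) irr by metis+
      let ?S = "{u,w,x}"
      have "?S \<in> ?T" unfolding triangles_def using u p uw ne inV sym by auto
      moreover have "p \<in> ?F ?S" using p ne by auto
      ultimately show "p \<in> (\<Union>T\<in>?T. ?F T)" by blast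
    qed
  next
    show "(\<Union>T\<in>?T. ?F T) \<subseteq> ?P"
    proof
      fix p assume "p \<in> (\<Union>T\<in>?T. ?F T)"
      then obtain T w x where T: "T \<in> ?T" "p = (w,x)" "w \<in> T - {u}" "x \<in> T - {u}" "w \<noteq> x" by auto
      have "T \<subseteq> V" "\<forall>a\<in>T. \<forall>b\<in>T. a \<noteq> b \<longrightarrow> E a b" "u \<in> T" using T(1) unfolding triangles_def by auto
      then show "p \<in> ?P" using T unfolding nbhd_def by auto
    qed
  qed
  have "card ?P = (\<Sum>T\<in>?T. card (?F T))"
    unfolding PU using finT finF disj by (intro card_UN_disjoint) auto
  also have "\<dots> = (\<Sum>T\<in>?T. 2)" using F2 by (intro sum.cong) auto
  also have "\<dots> = 2 * card ?T" by simp
  finally show ?thesis using 1 unfolding K3deg_def by simp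
qed


theorem lemma3p4:
  fixes V :: "'a set" and E :: "'a \<Rightarrow> 'a \<Rightarrow> bool" and r2 r3 k :: nat and u v :: 'a
  assumes "simple_graph V E"
    and "has_params V E r2 r3"
    and "E u v"
    and "K3deg_edge V E u v = k"
  shows "2 * int r3 \<le> (int r2 - int k - 1) * (int r2 - 2) + int k * (int k + 1)"
proof -
  note g = assms(1)
  have fin: "finite V" and inV: "\<And>a b. E a b \<Longrightarrow> a \<in> V \<and> b \<in> V"
    and sym: "\<And>a b. E a b \<Longrightarrow> E b a" and irr: "\<And>a. \<not> E a a"
    using g unfolding simple_graph_def by auto
  have symA: "\<forall>a b. E a b \<longrightarrow> E b a" using sym by blast
  have irrA: "\<forall>a. \<not> E a a" using irr by blast
  have uV: "u \<in> V" and vV: "v \<in> V" using inV assms(3) by auto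
  have uv: "u \<noteq> v" using assms(3) irr by metis
  define Nu where "Nu = nbhd V E u"
  define Nv where "Nv = nbhd V E v"
  define A where "A = Nu \<inter> Nv"
  define B where "B = Nu - Nv - {v}"
  define B' where "B' = Nv - Nu - {u}"
  have finNu: "finite Nu" and finNv: "finite Nv" using fin unfolding Nu_def Nv_def nbhd_def by auto
  have finA: "finite A" and finB: "finite B" and finB': "finite B'"
    using finNu finNv unfolding A_def B_def B'_def by auto
  have cA: "card A = k" using assms(4) unfolding A_def Nu_def Nv_def K3deg_edge_def by simp
  have dNu: "card Nu = r2" using assms(2) uV unfolding has_params_def degree_def Nu_def by auto
  have dNv: "card Nv = r2" using assms(2) vV unfolding has_params_def degree_def Nv_def by auto
  have vNu: "v \<in> Nu" using assms(3) vV unfolding Nu_def nbhd_def by auto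
  have uNv: "u \<in> Nv" using assms(3) uV sym unfolding Nv_def nbhd_def by auto
  have vA: "v \<notin> A" and uA: "u \<notin> A" using irr unfolding A_def Nu_def Nv_def nbhd_def by auto
  have Nu_eq: "Nu = ({v} \<union> A) \<union> B" using vNu unfolding A_def B_def by auto
  have Nv_eq: "Nv = ({u} \<union> A) \<union> B'" using uNv unfolding A_def B'_def by auto
  have dis1: "({v} \<union> A) \<inter> B = {}" "({u} \<union> A) \<inter> B' = {}" "{v} \<inter> A = {}" "{u} \<inter> A = {}"
    using vA uA unfolding A_def B_def B'_def by auto
  have cB: "card B = r2 - 1 - k"
  proof -
    have "card Nu = card ({v} \<union> A) + card B" unfolding Nu_eq
      using dis1 finA finB by (intro card_Un_disjoint) auto
    also have "card ({v} \<union> A) = 1 + k" using vA cA finA by simp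
    finally show ?thesis using dNu by simp
  qed
  have cB': "card B' = r2 - 1 - k"
  proof -
    have "card Nv = card ({u} \<union> A) + card B'" unfolding Nv_eq
      using dis1 finA finB' by (intro card_Un_disjoint) auto
    also have "card ({u} \<union> A) = 1 + k" using uA cA finA by simp
    finally show ?thesis using dNv by simp
  qed
  have kle: "k + 1 \<le> r2"
  proof -
    have "card Nu = card ({v} \<union> A) + card B" unfolding Nu_eq
      using dis1 finA finB by (intro card_Un_disjoint) auto
    also have "card ({v} \<union> A) = 1 + k" using vA cA finA by simp
    finally show ?thesis using dNu by simp
  qed
  have vB0: "pc E {v} B = 0"
  proof -
    have "{x\<in>B. E v x} = {}" using inV unfolding B_def Nv_def nbhd_def by auto
    then show ?thesis using finB by (simp add: pc_single)
  qed
  have uB'0: "pc E {u} B' = 0"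
  proof -
    have "{x\<in>B'. E u x} = {}" using inV unfolding B'_def Nu_def nbhd_def by auto
    then show ?thesis using finB' by (simp add: pc_single)
  qed
  have vA: "pc E {v} A = k"
  proof -
    have "{x\<in>A. E v x} = A" unfolding A_def Nv_def nbhd_def by auto
    then show ?thesis using finA cA by (simp add: pc_single)
  qed
  have uA': "pc E {u} A = k"
  proof -
    have "{x\<in>A. E u x} = A" unfolding A_def Nu_def nbhd_def by auto
    then show ?thesis using finA cA by (simp add: pc_single)
  qed
  have vv: "pc E {v} {v} = 0" "pc E {u} {u} = 0" using irr by (simp_all add: pc_single)
  have Av: "pc E A {v} = k" using vA pc_sym[OF symA] by metis
  have Au: "pc E A {u} = k" using uA' pc_sym[OF symA] by metis
  have BA: "pc E B A = pc E A B" "pc E B' A = pc E A B'" using pc_sym[OF symA] by metis+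
  have Bv: "pc E B {v} = 0" using vB0 pc_sym[OF symA] by metis
  have Bu: "pc E B' {u} = 0" using uB'0 pc_sym[OF symA] by metis
  have Su: "pc E Nu Nu = 2*k + pc E A A + 2 * pc E A B + pc E B B"
  proof -
    have L1: "pc E (({v} \<union> A) \<union> B) Y = pc E ({v} \<union> A) Y + pc E B Y" for Y
      using dis1 finA finB by (intro pc_UnL) auto
    have L2: "pc E ({v} \<union> A) Y = pc E {v} Y + pc E A Y" for Y
      using dis1 finA by (intro pc_UnL) auto
    have R1: "pc E Y (({v} \<union> A) \<union> B) = pc E Y ({v} \<union> A) + pc E Y B" for Y
      using dis1 finA finB by (intro pc_UnR) auto
    have R2: "pc E Y ({v} \<union> A) = pc E Y {v} + pc E Y A" for Y
      using dis1 finA by (intro pc_UnR) auto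
    show ?thesis unfolding Nu_eq L1 L2 R1 R2 using vv(1) vA Av BA(1) vB0 Bv by simp
  qed
  have Sv: "pc E Nv Nv = 2*k + pc E A A + 2 * pc E A B' + pc E B' B'"
  proof -
    have L1: "pc E (({u} \<union> A) \<union> B') Y = pc E ({u} \<union> A) Y + pc E B' Y" for Y
      using dis1 finA finB' by (intro pc_UnL) auto
    have L2: "pc E ({u} \<union> A) Y = pc E {u} Y + pc E A Y" for Y
      using dis1 finA by (intro pc_UnL) auto
    have R1: "pc E Y (({u} \<union> A) \<union> B') = pc E Y ({u} \<union> A) + pc E Y B'" for Y
      using dis1 finA finB' by (intro pc_UnR) auto
    have R2: "pc E Y ({u} \<union> A) = pc E Y {u} + pc E Y A" for Y
      using dis1 finA by (intro pc_UnR) auto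
    show ?thesis unfolding Nv_eq L1 L2 R1 R2 using vv(2) uA' Au BA(2) uB'0 Bu by simp
  qed
  define W where "W = {u} \<union> ({v} \<union> A \<union> B) \<union> B'"
  have finW: "finite W" using finA finB finB' unfolding W_def by auto
  have dis2: "{u} \<inter> ({v} \<union> A \<union> B) = {}" "({u} \<union> ({v} \<union> A \<union> B)) \<inter> B' = {}"
    using uv uA unfolding B_def B'_def A_def using uNv vNu by auto
  have pW: "pc E A W = 2*k + pc E A A + pc E A B + pc E A B'"
  proof -
    have R1: "pc E A W = pc E A ({u} \<union> ({v} \<union> A \<union> B)) + pc E A B'"
      unfolding W_def using dis2 finA finB finB' by (intro pc_UnR) auto
    have R2: "pc E A ({u} \<union> ({v} \<union> A \<union> B)) = pc E A {u} + pc E A ({v} \<union> A \<union> B)"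
      using dis2 finA finB by (intro pc_UnR) auto
    have R3: "pc E A ({v} \<union> A \<union> B) = pc E A ({v} \<union> A) + pc E A B"
      using dis1 finA finB by (intro pc_UnR) auto
    have R4: "pc E A ({v} \<union> A) = pc E A {v} + pc E A A"
      using dis1 finA by (intro pc_UnR) auto
    show ?thesis unfolding R1 R2 R3 R4 using Au Av by simp
  qed
  have pWle: "pc E A W \<le> k * r2"
  proof -
    have "pc E A W = (\<Sum>w\<in>A. card {x\<in>W. E w x})" using finW by (simp add: pc_card)
    also have "\<dots> \<le> (\<Sum>w\<in>A. r2)"
    proof (rule sum_mono)
      fix w assume w: "w \<in> A"
      then have wV: "w \<in> V" unfolding A_def Nu_def nbhd_def by auto
      have "{x\<in>W. E w x} \<subseteq> nbhd V E w" using inV unfolding nbhd_def by auto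
      then have "card {x\<in>W. E w x} \<le> card (nbhd V E w)"
        using fin by (intro card_mono) (auto simp: nbhd_def)
      also have "\<dots> = r2" using assms(2) wV unfolding has_params_def degree_def by auto
      finally show "card {x\<in>W. E w x} \<le> r2" .
    qed
    finally show ?thesis using cA by simp
  qed
  have BB: "pc E B B \<le> (r2 - 1 - k) * (r2 - 1 - k - 1)" using pc_diag[of B E, OF finB irrA] cB by simp
  have BB': "pc E B' B' \<le> (r2 - 1 - k) * (r2 - 1 - k - 1)" using pc_diag[of B' E, OF finB' irrA] cB' by simp
  have r3u: "2 * r3 = pc E Nu Nu" using tri_count[OF g uV] assms(2) uV
    unfolding Nu_def has_params_def by auto
  have r3v: "2 * r3 = pc E Nv Nv" using tri_count[OF g vV] assms(2) vV
    unfolding Nv_def has_params_def by auto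
  have main: "4 * r3 \<le> 2 * (k * r2) + 2 * ((r2 - 1 - k) * (r2 - 1 - k - 1))"
    using Su Sv pW pWle BB BB' r3u r3v by linarith
  define b where "b = r2 - 1 - k"
  have b: "r2 = b + k + 1" using kle unfolding b_def by simp
  have bb: "r2 - 1 - k = b" using b by simp
  have m2: "4 * r3 \<le> 2 * (k * r2) + 2 * (b * (b - 1))" using main unfolding bb .
  have bint: "int b * int (b - 1) = int b * (int b - 1)" by (cases b) (auto simp: algebra_simps)
  have m3: "4 * int r3 \<le> 2 * (int k * int r2) + 2 * (int b * (int b - 1))"
  proof -
    have "int (4 * r3) \<le> int (2 * (k * r2) + 2 * (b * (b - 1)))" using m2 by (simp only: of_nat_le_iff)
    then show ?thesis using bint by (simp del: mult_eq_0_iff) (metis (no_types) mult_zero_left of_nat_0 mult_eq_0_iff)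
  qed
  have eq: "(int r2 - int k - 1) * (int r2 - 2) + int k * (int k + 1) = int k * int r2 + int b * (int b - 1)"
    using b by (simp add: algebra_simps)
  show ?thesis using m3 eq by linarith
qed

end
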